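(* Assume additionally that $f(\mathbf x,\cdot)$ is convex for every $\mathbf x\in\mathcal X$. Let $\{\mathbf y_k(\cdot,\cdot)\}_{k\ge0}$ be a sequence of maps $\mathcal X\times\mathcal Y\to\mathbb R^m$ such that $\mathbf y_k(\mathbf x,\mathbf z)\in\mathcal Y$ for all $k,\mathbf x,\mathbf z$, and $\mathbf y_k(\mathbf x,\mathbf z)=\mathbf z$ for all $k\ge0$, $\mathbf x\in\mathcal X$, $\mathbf z\in\mathcal S(\mathbf x)$. Suppose that either (a) for every $\epsilon>0$ there is $k(\epsilon)>0$ such that for all $K>k(\epsilon)$, $\sup_{\mathbf x\in\mathcal X,\mathbf z\in\mathcal Y}\{f(\mathbf x,\mathbf y_K(\mathbf x,\mathbf z))-f^*(\mathbf x)\}\le\epsilon$; or (b) there is $\alpha>0$ such that for every $\epsilon>0$ there is $k(\epsilon)>0$ such that for all $K>k(\epsilon)$, $\sup_{\mathbf x\in\mathcal X,\mathbf z\in\mathcal Y}\|\mathcal R_\alpha(\mathbf x,\mathbf y_K(\mathbf x,\mathbf z))\|\le\epsilon$. For $K\ge1$ let $\phi_K(\mathbf x,\mathbf z):=F(\mathbf x,\mathbf y_K(\mathbf x,\mathbf z))$ and let $(\mathbf x_K,\mathbf z_K)\in\arg\min_{\mathbf x\in\mathcal X,\mathbf z\in\mathcal Y}\phi_K(\mathbf x,\mathbf z)$ (assumed to exist). Then: (1) every limit point $\bar{\mathbf x}$ of $\{\mathbf x_K\}$ satisfies $\bar{\mathbf x}\in\arg\min_{\mathbf x\in\mathcal X}\varphi(\mathbf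 x)$; (2) $\inf_{\mathbf x\in\mathcal X,\mathbf z\in\mathcal Y}\phi_K(\mathbf x,\mathbf z)\to\inf_{\mathbf x\in\mathcal X}\varphi(\mathbf x)$ as $K\to\infty$.
   Context: Let $F,f:\mathbb R^n\times\mathbb R^m\to\mathbb R$ and $\mathcal X\subset\mathbb R^n$, $\mathcal Y\subset\mathbb R^m$. Standing assumptions: (i) $F$ and $f$ are continuous; (ii) $f$ is differentiable, $\nabla f$ is continuous, and there is $L_f>0$ such that for every $\mathbf x\in\mathcal X$ the map $\mathbf y\mapsto\nabla_{\mathbf y}f(\mathbf x,\mathbf y)$ is $L_f$-Lipschitz; (iii) $\mathcal X$ and $\mathcal Y$ are nonempty convex compact sets; (iv) $\mathcal S(\mathbf x):=\arg\min_{\mathbf y\in\mathcal Y}f(\mathbf x,\mathbf y)$ is nonempty for every $\mathbf x\in\mathcal X$. Notation: $f^*(\mathbf x):=\min_{\mathbf y\in\mathcal Y}f(\mathbf x,\mathbf y)$; $\varphi(\mathbf x):=\inf_{\mathbf y\in\mathcal S(\mathbf x)}F(\mathbf x,\mathbf y)$; $\mathtt{Proj}_{\mathcal Y}$ is Euclidean projection onto $\mathcal Y$; for $\alpha>0$, $\mathcal R_\alpha(\mathbf x,\mathbf y):=\mathbf y-\mathtt{Proj}_{\mathcal Y}(\mathbf y-\alpha\nabla_{\mathbf y}f(\mathbf x,\mathbf y))$. *)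

theory Defs
  imports "HOL-Analysis.Analysis"
begin

definition Sol :: "('a \<Rightarrow> 'b \<Rightarrow> real) \<Rightarrow> 'b set \<Rightarrow> 'a \<Rightarrow> 'b set" where
  "Sol f Y x = {y \<in> Y. \<forall>y'\<in>Y. f x y \<le> f x y'}"

definition fstar :: "('a \<Rightarrow> 'b \<Rightarrow> real) \<Rightarrow> 'b set \<Rightarrow> 'a \<Rightarrow> real" where
  "fstar f Y x = (INF y\<in>Y. f x y)"

definition varphi :: "('a \<Rightarrow> 'b \<Rightarrow> real) \<Rightarrow> ('a \<Rightarrow> 'b \<Rightarrow> real) \<Rightarrow> 'b set \<Rightarrow> 'a \<Rightarrow> real" where
  "varphi F f Y x = (INF y\<in>Sol f Y x. F x y)"

definition Proj :: "'b::euclidean_space set \<Rightarrow> 'b \<Rightarrow> 'b" where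
  "Proj Y v = closest_point Y v"

text \<open>Proximal residual R_alpha(x,y) = y - Proj_Y(y - alpha * grad_y f(x,y)),
  where gyf x y is the partial gradient of f w.r.t. y.\<close>
definition Res :: "'b::euclidean_space set \<Rightarrow> ('a \<Rightarrow> 'b \<Rightarrow> 'b) \<Rightarrow> real \<Rightarrow> 'a \<Rightarrow> 'b \<Rightarrow> 'b" where
  "Res Y gyf \<alpha> x y = y - Proj Y (y - \<alpha> *\<^sub>R gyf x y)"

end

theory Submission imports Defs begin
lemma grad_ineq:
  fixes f :: "'a::euclidean_space \<Rightarrow> 'b::euclidean_space \<Rightarrow> real"
  assumes fd: "\<And>p. ((\<lambda>p. f (fst p) (snd p)) has_derivative (\<lambda>h. Df p \<bullet> h)) (at p)"
    and cv: "convex_on UNIV (f a)"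
  shows "snd (Df (a,b)) \<bullet> (w - b) \<le> f a w - f a b"
proof -
  have "((\<lambda>y. (a,y)) has_derivative (\<lambda>h. (0,h))) (at b)"
    by (auto intro!: derivative_eq_intros)
  from has_derivative_compose[OF this fd[of "(a,b)"]]
  have d1: "((\<lambda>y. f a y) has_derivative (\<lambda>h. snd (Df (a,b)) \<bullet> h)) (at (b + 0 *\<^sub>R (w - b)))"
    by (simp add: inner_prod_def)
  have "((\<lambda>t::real. b + t *\<^sub>R (w - b)) has_derivative (\<lambda>t. t *\<^sub>R (w - b))) (at 0)"
    by (auto intro!: derivative_eq_intros)
  from has_derivative_compose[OF this d1]
  have dd: "((\<lambda>t. f a (b + t *\<^sub>R (w - b))) has_derivative (\<lambda>t. snd (Df (a,b)) \<bullet> (t *\<^sub>R (w - b)))) (at 0)" .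
  have d2: "((\<lambda>t. f a (b + t *\<^sub>R (w - b))) has_field_derivative (snd (Df (a,b)) \<bullet> (w - b))) (at 0 within UNIV)"
  proof -
    have e: "(\<lambda>t::real. t * (snd (Df (a, b)) \<bullet> (w - b))) = (*) (snd (Df (a, b)) \<bullet> (w - b))"
      by (rule ext) (simp add: mult.commute)
    show ?thesis unfolding has_field_derivative_def using dd by (simp add: e[symmetric])
  qed
  have cv2: "convex_on UNIV (\<lambda>t. f a (b + t *\<^sub>R (w - b)))"
  proof (rule convex_onI)
    fix t x y :: real assume t: "0 < t" "t < 1"
    have "b + ((1 - t) * x + t * y) *\<^sub>R (w - b) = (1 - t) *\<^sub>R (b + x *\<^sub>R (w - b)) + t *\<^sub>R (b + y *\<^sub>R (w - b))"
      by (simp add: algebra_simps)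
    then show "f a (b + ((1 - t) *\<^sub>R x + t *\<^sub>R y) *\<^sub>R (w - b)) \<le> (1 - t) * f a (b + x *\<^sub>R (w - b)) + t * f a (b + y *\<^sub>R (w - b))"
      using convex_onD[OF cv, of t] t by simp
  qed simp
  have "snd (Df (a,b)) \<bullet> (w - b) * (1 - 0) \<le> f a (b + 1 *\<^sub>R (w - b)) - f a (b + 0 *\<^sub>R (w - b))"
    by (rule convex_on_imp_above_tangent[OF cv2]) (use d2 in auto)
  then show ?thesis by simp
qed
theorem theorem3p3:
  fixes F f :: "'a::euclidean_space \<Rightarrow> 'b::euclidean_space \<Rightarrow> real"
    and Df :: "'a \<times> 'b \<Rightarrow> 'a \<times> 'b"
    and X :: "'a set" and Y :: "'b set"
    and yk :: "nat \<Rightarrow> 'a \<Rightarrow> 'b \<Rightarrow> 'b"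
    and xs :: "nat \<Rightarrow> 'a" and zs :: "nat \<Rightarrow> 'b"
  assumes F_cont: "continuous_on UNIV (\<lambda>p. F (fst p) (snd p))"
    and f_cont: "continuous_on UNIV (\<lambda>p. f (fst p) (snd p))"
    and f_diff: "\<And>p. ((\<lambda>p. f (fst p) (snd p)) has_derivative (\<lambda>h. Df p \<bullet> h)) (at p)"
    and Df_cont: "continuous_on UNIV Df"
    and Lip: "\<exists>Lf>0. \<forall>x\<in>X. \<forall>y y'. norm (snd (Df (x, y)) - snd (Df (x, y'))) \<le> Lf * norm (y - y')"
    and X_conv: "convex X" and X_comp: "compact X" and X_ne: "X \<noteq> {}"
    and Y_conv: "convex Y" and Y_comp: "compact Y" and Y_ne: "Y \<noteq> {}"
    and S_ne: "\<And>x. x \<in> X \<Longrightarrow> Sol f Y x \<noteq> {}"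
    and f_convex: "\<And>x. x \<in> X \<Longrightarrow> convex_on UNIV (f x)"
    and yk_in: "\<And>k x z. x \<in> X \<Longrightarrow> z \<in> Y \<Longrightarrow> yk k x z \<in> Y"
    and yk_fix: "\<And>k x z. x \<in> X \<Longrightarrow> z \<in> Sol f Y x \<Longrightarrow> yk k x z = z"
    and conv: "(\<forall>\<epsilon>>0. \<exists>k0::nat>0. \<forall>K>k0. \<forall>x\<in>X. \<forall>z\<in>Y.
                   f x (yk K x z) - fstar f Y x \<le> \<epsilon>)
             \<or> (\<exists>\<alpha>>0. \<forall>\<epsilon>>0. \<exists>k0::nat>0. \<forall>K>k0. \<forall>x\<in>X. \<forall>z\<in>Y.
                   norm (Res Y (\<lambda>x y. snd (Df (x, y))) \<alpha> x (yk K x z)) \<le> \<epsilon>)"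
    and xs_in: "\<And>K. K \<ge> 1 \<Longrightarrow> xs K \<in> X"
    and zs_in: "\<And>K. K \<ge> 1 \<Longrightarrow> zs K \<in> Y"
    and argmin: "\<And>K x z. K \<ge> 1 \<Longrightarrow> x \<in> X \<Longrightarrow> z \<in> Y \<Longrightarrow>
                   F (xs K) (yk K (xs K) (zs K)) \<le> F x (yk K x z)"
  shows "(\<forall>xbar r. strict_mono r \<and> (xs \<circ> r) \<longlonglongrightarrow> xbar \<longrightarrow>
             xbar \<in> X \<and> (\<forall>x\<in>X. varphi F f Y xbar \<le> varphi F f Y x))
       \<and> (\<lambda>K. INF p\<in>X \<times> Y. F (fst p) (yk K (fst p) (snd p)))
             \<longlonglongrightarrow> (INF x\<in>X. varphi F f Y x)"
proof -
  define w where "w = (\<lambda>K. yk K (xs K) (zs K))"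
  define m where "m = (\<lambda>K. F (xs K) (w K))"
  define Fp where "Fp = (\<lambda>p. F (fst p) (snd p))"
  define fp where "fp = (\<lambda>p. f (fst p) (snd p))"
  have cX: "closed X" using X_comp compact_imp_closed by blast
  have cY: "closed Y" using Y_comp compact_imp_closed by blast
  have Fc: "\<And>p. isCont Fp p" using F_cont unfolding Fp_def continuous_on_eq_continuous_at[OF open_UNIV] by blast
  have fc: "\<And>p. isCont fp p" using f_cont unfolding fp_def continuous_on_eq_continuous_at[OF open_UNIV] by blast
  have "compact (Fp ` (X \<times> Y))"
    by (intro compact_continuous_image continuous_on_subset[OF F_cont[folded Fp_def]] compact_Times X_comp Y_comp) auto
  then have "bdd_below (Fp ` (X \<times> Y))" by (intro bounded_imp_bdd_below compact_imp_bounded)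
  then obtain B where B0: "\<And>p. p \<in> X \<times> Y \<Longrightarrow> B \<le> Fp p" unfolding bdd_below_def by auto
  have B: "\<And>x y. x \<in> X \<Longrightarrow> y \<in> Y \<Longrightarrow> B \<le> F x y" using B0 unfolding Fp_def by fastforce
  have "compact (fp ` (X \<times> Y))"
    by (intro compact_continuous_image continuous_on_subset[OF f_cont[folded fp_def]] compact_Times X_comp Y_comp) auto
  then have "bdd_below (fp ` (X \<times> Y))" by (intro bounded_imp_bdd_below compact_imp_bounded)
  then obtain Bf where Bf0: "\<And>p. p \<in> X \<times> Y \<Longrightarrow> Bf \<le> fp p" unfolding bdd_below_def by auto
  have Bf: "\<And>x y. x \<in> X \<Longrightarrow> y \<in> Y \<Longrightarrow> Bf \<le> f x y" using Bf0 unfolding fp_def by fastforce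
  have SY: "\<And>x. Sol f Y x \<subseteq> Y" unfolding Sol_def by auto
  have key: "a \<in> X \<and> b \<in> Sol f Y a"
    if t: "strict_mono t" "\<And>n. t n \<ge> 1" and ta: "(\<lambda>n. xs (t n)) \<longlonglongrightarrow> a"
      and tb: "(\<lambda>n. w (t n)) \<longlonglongrightarrow> b" for t a b
  proof -
    have xin: "\<And>n. xs (t n) \<in> X" using xs_in t by auto
    have win: "\<And>n. w (t n) \<in> Y" using yk_in xs_in zs_in t unfolding w_def by auto
    have aX: "a \<in> X" using closed_sequentially[OF cX _ ta] xin by auto
    have bY: "b \<in> Y" using closed_sequentially[OF cY _ tb] win by auto
    have tpair: "(\<lambda>n. (xs (t n), w (t n))) \<longlonglongrightarrow> (a, b)" using ta tb by (rule tendsto_Pair)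
    have fconv: "(\<lambda>n. f (xs (t n)) (w (t n))) \<longlonglongrightarrow> f a b"
      using isCont_tendsto_compose[OF fc tpair] unfolding fp_def by simp
    have tge: "\<And>n. n \<le> t n" using t(1) seq_suble by blast
    have "\<forall>u\<in>Y. f a b \<le> f a u"
    proof
      fix u assume uY: "u \<in> Y"
      show "f a b \<le> f a u"
        using conv
      proof
        assume ca: "\<forall>\<epsilon>>0. \<exists>k0::nat>0. \<forall>K>k0. \<forall>x\<in>X. \<forall>z\<in>Y. f x (yk K x z) - fstar f Y x \<le> \<epsilon>"
        show ?thesis
        proof (rule field_le_epsilon)
          fix e :: real assume e: "0 < e"
          obtain k0 where k0: "\<forall>K>k0. \<forall>x\<in>X. \<forall>z\<in>Y. f x (yk K x z) - fstar f Y x \<le> e"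
            using ca e by blast
          have ucon: "(\<lambda>n. f (xs (t n)) u) \<longlonglongrightarrow> f a u"
            using isCont_tendsto_compose[OF fc tendsto_Pair[OF ta tendsto_const[of u]]] unfolding fp_def by simp
          have ev: "eventually (\<lambda>n. f (xs (t n)) (w (t n)) \<le> f (xs (t n)) u + e) sequentially"
            unfolding eventually_sequentially
          proof (intro exI allI impI)
            fix n assume "Suc k0 \<le> n"
            then have "t n > k0" using tge[of n] by linarith
            then have "f (xs (t n)) (w (t n)) - fstar f Y (xs (t n)) \<le> e"
              using k0 xin t(2) zs_in unfolding w_def by auto
            moreover have "fstar f Y (xs (t n)) \<le> f (xs (t n)) u"
              unfolding fstar_def
              by (rule cINF_lower[OF _ uY]) (rule bdd_belowI2[of _ Bf], use Bf xin in auto)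
            ultimately show "f (xs (t n)) (w (t n)) \<le> f (xs (t n)) u + e" by linarith
          qed
          have "f a b \<le> f a u + e"
            by (rule tendsto_le[OF _ tendsto_add[OF ucon tendsto_const] fconv ev]) simp
          then show "f a b \<le> f a u + e" .
        qed
      next
        assume "\<exists>\<alpha>>0. \<forall>\<epsilon>>0. \<exists>k0::nat>0. \<forall>K>k0. \<forall>x\<in>X. \<forall>z\<in>Y.
                   norm (Res Y (\<lambda>x y. snd (Df (x, y))) \<alpha> x (yk K x z)) \<le> \<epsilon>"
        then obtain \<alpha> where al: "\<alpha> > 0" and cb: "\<forall>\<epsilon>>0. \<exists>k0::nat>0. \<forall>K>k0. \<forall>x\<in>X. \<forall>z\<in>Y.
                   norm (Res Y (\<lambda>x y. snd (Df (x, y))) \<alpha> x (yk K x z)) \<le> \<epsilon>" by blast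
        define R where "R = (\<lambda>p. Res Y (\<lambda>x y. snd (Df (x, y))) \<alpha> (fst p) (snd p))"
        have Rc: "continuous_on UNIV R"
          unfolding R_def Res_def Proj_def
          by (intro continuous_intros continuous_on_compose2[OF continuous_on_closest_point[OF Y_conv cY Y_ne, of UNIV]]
                continuous_on_compose2[OF Df_cont, of UNIV]) auto
        have R1: "(\<lambda>n. R (xs (t n), w (t n))) \<longlonglongrightarrow> R (a, b)"
          using isCont_tendsto_compose[OF _ tpair] Rc unfolding continuous_on_eq_continuous_at[OF open_UNIV] by blast
        have R0: "(\<lambda>n. R (xs (t n), w (t n))) \<longlonglongrightarrow> 0"
          unfolding tendsto_iff
        proof (intro allI impI)
          fix e :: real assume e: "0 < e"
          obtain k0 where k0: "\<forall>K>k0. \<forall>x\<in>X. \<forall>z\<in>Y. norm (Res Y (\<lambda>x y. snd (Df (x, y))) \<alpha> x (yk K x z)) \<le> e/2"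
            using cb e by (meson half_gt_zero)
          show "eventually (\<lambda>n. dist (R (xs (t n), w (t n))) 0 < e) sequentially"
            unfolding eventually_sequentially
          proof (intro exI allI impI)
            fix n assume "Suc k0 \<le> n"
            then have "t n > k0" using tge[of n] by linarith
            then have "norm (R (xs (t n), w (t n))) \<le> e/2"
              using k0 xin t(2) zs_in unfolding w_def R_def by auto
            then show "dist (R (xs (t n), w (t n))) 0 < e" using e by simp
          qed
        qed
        have "R (a, b) = 0" using LIMSEQ_unique[OF R1 R0] .
        then have bp: "closest_point Y (b - \<alpha> *\<^sub>R snd (Df (a, b))) = b"
          unfolding R_def Res_def Proj_def by simp
        have "inner ((b - \<alpha> *\<^sub>R snd (Df (a, b))) - b) (u - b) \<le> 0"
          using closest_point_dot[OF Y_conv cY uY, of "b - \<alpha> *\<^sub>R snd (Df (a, b))"] bp by simp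
        then have "- \<alpha> * (snd (Df (a, b)) \<bullet> (u - b)) \<le> 0" by simp
        then have "snd (Df (a, b)) \<bullet> (u - b) \<ge> 0" using al
          by (simp add: zero_le_mult_iff)
        moreover have "snd (Df (a, b)) \<bullet> (u - b) \<le> f a u - f a b"
          by (rule grad_ineq[OF f_diff f_convex[OF aX]])
        ultimately show ?thesis by linarith
      qed
    qed
    then show ?thesis using aX bY unfolding Sol_def by auto
  qed
  have mle: "m K \<le> varphi F f Y x" if "K \<ge> 1" "x \<in> X" for K x
    unfolding varphi_def
  proof (rule cINF_greatest[OF S_ne[OF that(2)]])
    fix z assume z: "z \<in> Sol f Y x"
    then have "z \<in> Y" using SY by blast
    then show "m K \<le> F x z" using argmin[OF that \<open>z \<in> Y\<close>] yk_fix[OF that(2) z] unfolding m_def w_def by simp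
  qed
  have philow: "B \<le> varphi F f Y x" if "x \<in> X" for x
    unfolding varphi_def by (rule cINF_greatest[OF S_ne[OF that]]) (use B SY that in blast)
  have phile: "varphi F f Y x \<le> F x y" if "x \<in> X" "y \<in> Sol f Y x" for x y
    unfolding varphi_def by (rule cINF_lower[OF _ that(2)], rule bdd_belowI2[of _ B]) (use B SY that in blast)
  have subext: "\<exists>s a b. strict_mono s \<and> a \<in> X \<and> b \<in> Sol f Y a \<and>
      (\<lambda>n. xs (r (Suc (s n)))) \<longlonglongrightarrow> a \<and> (\<lambda>n. w (r (Suc (s n)))) \<longlonglongrightarrow> b" if r: "strict_mono r" for r
  proof -
    have r1: "r (Suc n) \<ge> 1" for n
    proof -
      have "r 0 < r (Suc n)" by (rule strict_monoD[OF r]) simp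
      then show ?thesis by simp
    qed
    define q where "q = (\<lambda>n. (xs (r (Suc n)), w (r (Suc n))))"
    have "\<forall>n. q n \<in> X \<times> Y" using r1 xs_in zs_in yk_in unfolding q_def w_def by auto
    then obtain l s where l: "l \<in> X \<times> Y" "strict_mono s" "(q \<circ> s) \<longlonglongrightarrow> l"
      using seq_compactE[OF compact_imp_seq_compact[OF compact_Times[OF X_comp Y_comp]]] by blast
    have c1: "(\<lambda>n. xs (r (Suc (s n)))) \<longlonglongrightarrow> fst l" using tendsto_fst[OF l(3)] unfolding q_def by (simp add: o_def)
    have c2: "(\<lambda>n. w (r (Suc (s n)))) \<longlonglongrightarrow> snd l" using tendsto_snd[OF l(3)] unfolding q_def by (simp add: o_def)
    have sm: "strict_mono (\<lambda>n. r (Suc (s n)))" using r l(2) unfolding strict_mono_def by simp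
    have "fst l \<in> X \<and> snd l \<in> Sol f Y (fst l)"
      by (rule key[OF sm _ c1 c2]) (use r1 in auto)
    then show ?thesis using l(2) c1 c2 by blast
  qed
  have mconv: "(\<lambda>n. m (r (Suc (s n)))) \<longlonglongrightarrow> F a b"
    if "(\<lambda>n. xs (r (Suc (s n)))) \<longlonglongrightarrow> a" "(\<lambda>n. w (r (Suc (s n)))) \<longlonglongrightarrow> b" for r s a b
    using isCont_tendsto_compose[OF Fc tendsto_Pair[OF that]] unfolding Fp_def m_def by simp
  have part1: "xbar \<in> X \<and> (\<forall>x\<in>X. varphi F f Y xbar \<le> varphi F f Y x)"
    if r: "strict_mono r" and xr: "(xs \<circ> r) \<longlonglongrightarrow> xbar" for r xbar
  proof -
    obtain s a b where sab: "strict_mono s" "a \<in> X" "b \<in> Sol f Y a"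
      "(\<lambda>n. xs (r (Suc (s n)))) \<longlonglongrightarrow> a" "(\<lambda>n. w (r (Suc (s n)))) \<longlonglongrightarrow> b"
      using subext[OF r] by blast
    have "strict_mono (\<lambda>n. Suc (s n))" using sab(1) unfolding strict_mono_def by simp
    from LIMSEQ_subseq_LIMSEQ[OF xr this]
    have "(\<lambda>n. xs (r (Suc (s n)))) \<longlonglongrightarrow> xbar" by (simp add: o_def)
    then have ax: "a = xbar" using LIMSEQ_unique sab(4) by blast
    have "\<forall>x\<in>X. varphi F f Y a \<le> varphi F f Y x"
    proof
      fix x assume x: "x \<in> X"
      have "F a b \<le> varphi F f Y x"
      proof (rule LIMSEQ_le_const2[OF mconv[OF sab(4,5)]])
        have "r (Suc (s n)) \<ge> 1" for n
        proof -
          have "r 0 < r (Suc (s n))" by (rule strict_monoD[OF r]) simp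
          then show ?thesis by simp
        qed
        then show "\<exists>N. \<forall>n\<ge>N. m (r (Suc (s n))) \<le> varphi F f Y x" using mle x by blast
      qed
      then show "varphi F f Y a \<le> varphi F f Y x" using phile[OF sab(2,3)] by linarith
    qed
    then show ?thesis using ax sab(2) by blast
  qed
  define v where "v = (INF x\<in>X. varphi F f Y x)"
  have mlev: "m K \<le> v" if "K \<ge> 1" for K
    unfolding v_def by (rule cINF_greatest[OF X_ne]) (use mle that in blast)
  have vle: "v \<le> varphi F f Y x" if "x \<in> X" for x
    unfolding v_def by (rule cINF_lower[OF _ that], rule bdd_belowI2[of _ B]) (use philow in blast)
  have infeq: "(INF p\<in>X \<times> Y. F (fst p) (yk K (fst p) (snd p))) = m K" if "K \<ge> 1" for K
    unfolding m_def w_def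
    proof (rule cInf_eq_minimum)
    show "F (xs K) (yk K (xs K) (zs K)) \<in> (\<lambda>p. F (fst p) (yk K (fst p) (snd p))) ` (X \<times> Y)"
      by (rule image_eqI[of _ _ "(xs K, zs K)"]) (use that xs_in zs_in in auto)
  qed (use that argmin in auto)
  have mv: "m \<longlonglongrightarrow> v"
  proof (rule ccontr)
    assume "\<not> m \<longlonglongrightarrow> v"
    then obtain e where e: "e > 0" "\<not> eventually (\<lambda>K. dist (m K) v < e) sequentially"
      unfolding tendsto_iff by blast
    define S where "S = {K. K \<ge> 1 \<and> m K \<le> v - e}"
    have "infinite S" unfolding infinite_nat_iff_unbounded_le
    proof
      fix N
      from e(2) obtain K where K: "K \<ge> max N 1" "\<not> dist (m K) v < e"
        unfolding eventually_sequentially by blast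
      then have "m K \<le> v" using mlev by simp
      then have "m K \<le> v - e" using K(2) by (simp add: dist_real_def)
      then show "\<exists>K\<ge>N. K \<in> S" using K(1) unfolding S_def by auto
    qed
    then obtain r :: "nat \<Rightarrow> nat" where r: "strict_mono r" "\<And>n. r n \<in> S"
      using infinite_enumerate by blast
    obtain s a b where sab: "strict_mono s" "a \<in> X" "b \<in> Sol f Y a"
      "(\<lambda>n. xs (r (Suc (s n)))) \<longlonglongrightarrow> a" "(\<lambda>n. w (r (Suc (s n)))) \<longlonglongrightarrow> b"
      using subext[OF r(1)] by blast
    have "F a b \<le> v - e"
      by (rule LIMSEQ_le_const2[OF mconv[OF sab(4,5)]]) (use r(2) S_def in auto)
    moreover have "v \<le> F a b" using vle[OF sab(2)] phile[OF sab(2,3)] by linarith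
    ultimately show False using e(1) by linarith
  qed
  have "(\<lambda>K. INF p\<in>X \<times> Y. F (fst p) (yk K (fst p) (snd p))) \<longlonglongrightarrow> v"
  proof (rule Lim_transform_eventually[OF mv])
    show "eventually (\<lambda>K. m K = (INF p\<in>X \<times> Y. F (fst p) (yk K (fst p) (snd p)))) sequentially"
      unfolding eventually_sequentially using infeq by (metis)
  qed
  then show ?thesis using part1 unfolding v_def by blast
qed

end
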